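(* Let $S$ be a finite semigroup and let $I$ be an ideal of $S$ (possibly $I=\varnothing$). Then $$\mathbf{Sub}(S)=\big\{\langle (U\setminus\{0\})\cup L \rangle \;\big|\; U\in \mathbf{Sub}(S/I),\ L\in\mathbf{Sub}(I)\big\},$$ where for each $U\in\mathbf{Sub}(S/I)$ the set $U\setminus\{0\}$ is regarded as a subset of $S\setminus I\subseteq S$, and the generated subsemigroup $\langle\cdot\rangle$ is taken in $S$.
   Context: For a semigroup $X$, $\mathbf{Sub}(X)$ denotes the set of all subsemigroups of $X$, where the empty set is considered a subsemigroup (so $\varnothing\in\mathbf{Sub}(X)$). For $A\subseteq S$, $\langle A\rangle$ denotes the least subsemigroup of $S$ containing $A$ (so $\langle\varnothing\rangle=\varnothing$). For an ideal $I$ of $S$, the Rees factor semigroup $S/I$ has elements $(S\setminus I)\cup\{0\}$, where $0$ is a new symbol not in $S$, with multiplication $s\cdot t=st$ if $s,t,st\in S\setminus I$, and $s\cdot t=0$ otherwise (in particular $S/\varnothing\cong S^0$, $S$ with a zero adjoined). A subsemigroup of $S/I$ need not contain $0$. *)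

theory Defs
  imports Main
begin

text \<open>The finite semigroup S is the universe of a type of class semigroup_mult and finite.
Sub(X) includes the empty set.\<close>

definition subsemigroup :: "'a::semigroup_mult set \<Rightarrow> bool" where
  "subsemigroup A \<longleftrightarrow> (\<forall>x\<in>A. \<forall>y\<in>A. x * y \<in> A)"

definition generated :: "'a::semigroup_mult set \<Rightarrow> 'a set" where
  "generated A = \<Inter> {B. A \<subseteq> B \<and> subsemigroup B}"

definition semigroup_ideal :: "'a::semigroup_mult set \<Rightarrow> bool" where
  "semigroup_ideal I \<longleftrightarrow> (\<forall>s i. i \<in> I \<longrightarrow> s * i \<in> I \<and> i * s \<in> I)"

text \<open>Rees factor S/I: elements are Some s for s not in I, and None playing the role of 0.\<close>

definition rees_carrier :: "'a::semigroup_mult set \<Rightarrow> 'a option set" where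
  "rees_carrier I = insert None (Some ` (- I))"

fun rees_mult :: "'a::semigroup_mult set \<Rightarrow> 'a option \<Rightarrow> 'a option \<Rightarrow> 'a option" where
  "rees_mult I (Some s) (Some t) =
     (if s \<notin> I \<and> t \<notin> I \<and> s * t \<notin> I then Some (s * t) else None)"
| "rees_mult I _ _ = None"

definition rees_subsemigroups :: "'a::semigroup_mult set \<Rightarrow> 'a option set set" where
  "rees_subsemigroups I =
     {U. U \<subseteq> rees_carrier I \<and> (\<forall>x\<in>U. \<forall>y\<in>U. rees_mult I x y \<in> U)}"

end

theory Submission
  imports Defs
begin

lemma gen_sub: "subsemigroup (generated X)"
  unfolding subsemigroup_def generated_def by (auto simp: subsemigroup_def)

lemma gen_id: "subsemigroup A \<Longrightarrow> generated A = A"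
  unfolding generated_def by blast

theorem lemma4p1:
  fixes I :: "'a::{semigroup_mult, finite} set"
  assumes "semigroup_ideal I"
  shows "{A :: 'a set. subsemigroup A} =
    {generated ({s. Some s \<in> U} \<union> L) | U L.
       U \<in> rees_subsemigroups I \<and> L \<subseteq> I \<and> subsemigroup L}"
proof
  show "{generated ({s. Some s \<in> U} \<union> L) | U L.
       U \<in> rees_subsemigroups I \<and> L \<subseteq> I \<and> subsemigroup L} \<subseteq> {A. subsemigroup A}"
    using gen_sub by blast
next
  show "{A. subsemigroup A} \<subseteq> {generated ({s. Some s \<in> U} \<union> L) | U L.
       U \<in> rees_subsemigroups I \<and> L \<subseteq> I \<and> subsemigroup L}"
  proof
    fix A :: "'a set" assume "A \<in> {A. subsemigroup A}"
    hence A: "subsemigroup A" by simp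
    define U where "U = insert None (Some ` (A - I))"
    define L where "L = A \<inter> I"
    have U: "U \<in> rees_subsemigroups I"
      unfolding rees_subsemigroups_def rees_carrier_def U_def
    proof (intro CollectI conjI ballI)
      fix x y assume x: "x \<in> insert None (Some ` (A - I))" and y: "y \<in> insert None (Some ` (A - I))"
      show "rees_mult I x y \<in> insert None (Some ` (A - I))"
      proof (cases x)
        case None thus ?thesis by simp
      next
        case (Some s)
        show ?thesis
        proof (cases y)
          case None thus ?thesis using Some by simp
        next
          case (Some t)
          with \<open>x = Some s\<close> x y A show ?thesis by (auto simp: subsemigroup_def)
        qed
      qed
    qed auto
    have L: "L \<subseteq> I" "subsemigroup L"
      using A assms unfolding L_def subsemigroup_def semigroup_ideal_def by auto
    have "{s. Some s \<in> U} \<union> L = A" unfolding U_def L_def by auto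
    hence "generated ({s. Some s \<in> U} \<union> L) = A" using gen_id A by simp
    thus "A \<in> {generated ({s. Some s \<in> U} \<union> L) | U L.
       U \<in> rees_subsemigroups I \<and> L \<subseteq> I \<and> subsemigroup L}"
      using U L by blast
  qed
qed

end
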